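(* Let $U=U_1\times\cdots\times U_m$ with $U_i\subseteq\mathbb{R}^p$ be convex, $C\subseteq\mathbb{R}^{mp}$, $\overline{U}=U\cap C$, with $0\in\overline{U}$. Let $b\in\mathbb{R}^m$, let $f_1:\mathbb{R}^{n_1}\to\mathbb{R}$, $f_2:\mathbb{R}^{n_2}\to\mathbb{R}$ be concave with $f_1(0)=f_2(0)=0$, and for each $i\in[m]$ let $g_i(x,y,u_i)$ be convex in $(x,y)$ and concave in $u_i$, with $g_i(0,0,u_i)\le0$ for all $u\in U$ and $g_i(x,y,0)\ge0$ for all feasible $x,y$. For a set $S$ define $$z^{\rm ad}(S)=\sup_{x,\ y:S\to\mathbb{R}^{n_2}}\Big\{f_1(x)+\inf_{u\in S}f_2(y(u)):\ g_i(x,y(u),u_i)\le b_i\ \forall u\in S,\ \forall i\Big\},$$ $$z^{\rm st}(S)=\sup_{x,y}\{f_1(x)+f_2(y):\ g_i(x,y,u_i)\le b_i\ \forall u\in S,\ \forall i\},$$ and $z_{\rm aro}=z^{\rm ad}(U)$, $z_{\rm acp}=z^{\rm ad}(\overline{U})$, $z_{\rm ro}=z^{\rm st}(U)$, $z_{\rm cp}=z^{\rm st}(\overline{U})$. Let $\rho_{\rm ro}=\rho(U,\Pi(\overline{U}))$ and $\rho_{\rm aro}=\rho(U,\overline{U})$. Assume $\rho_{\rm aro}>0$, $z_{\rm acp}>0$ and $z_{\rm ro}<\infty$. Then $$\frac{z_{\rm cp}}{z_{\rm ro}}\le\frac{1}{\rho_{\rm ro}},\qquad\frac{z_{\rm acp}}{z_{\rm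 aro}}\le\frac{1}{\rho_{\rm aro}}.$$ Furthermore, the bounds are tight.
   Context: $u=(u_1,\dots,u_m)$ with $u_i\in\mathbb{R}^p$; $\Pi_i(S)$ is the projection of $S$ onto the $i$-th block, $\Pi(S)=\Pi_1(S)\times\cdots\times\Pi_m(S)$. For $r\ge0$, $rS=\{rx:x\in S\}$; $\rho(S_1,S_2)=\max\{\rho\ge0:\rho S_1\subseteq S_2\}$. *)

theory Defs
  imports "HOL-Analysis.Analysis"
begin

text \<open>Uncertainty vectors u = (u_1,...,u_m), u_i in R^p, are modelled as functions
  nat \<Rightarrow> 'c (with 'c a Euclidean space playing the role of R^p) that vanish outside
  the index range {0..<m}.\<close>

definition blockvecs :: "nat \<Rightarrow> (nat \<Rightarrow> 'c::real_vector) set" where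
  "blockvecs m = {u. \<forall>i. m \<le> i \<longrightarrow> u i = 0}"

definition prodset :: "nat \<Rightarrow> (nat \<Rightarrow> 'c::real_vector set) \<Rightarrow> (nat \<Rightarrow> 'c) set" where
  "prodset m Us = {u \<in> blockvecs m. \<forall>i<m. u i \<in> Us i}"

definition proj :: "nat \<Rightarrow> (nat \<Rightarrow> 'c) set \<Rightarrow> 'c set" where
  "proj i S = (\<lambda>u. u i) ` S"

definition Proj :: "nat \<Rightarrow> (nat \<Rightarrow> 'c::real_vector) set \<Rightarrow> (nat \<Rightarrow> 'c) set" where
  "Proj m S = prodset m (\<lambda>i. proj i S)"

definition scaleS :: "real \<Rightarrow> (nat \<Rightarrow> 'c::real_vector) set \<Rightarrow> (nat \<Rightarrow> 'c) set" where
  "scaleS r S = (\<lambda>u. \<lambda>i. r *\<^sub>R u i) ` S"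

definition rho_set :: "(nat \<Rightarrow> 'c::real_vector) set \<Rightarrow> (nat \<Rightarrow> 'c) set \<Rightarrow> real set" where
  "rho_set S1 S2 = {r. 0 \<le> r \<and> scaleS r S1 \<subseteq> S2}"

text \<open>rho(S1,S2) = max {rho >= 0 : rho S1 \<subseteq> S2} (taken as the supremum; existence of the
  maximum/finiteness is an explicit hypothesis where used).\<close>
definition rho :: "(nat \<Rightarrow> 'c::real_vector) set \<Rightarrow> (nat \<Rightarrow> 'c) set \<Rightarrow> real" where
  "rho S1 S2 = Sup (rho_set S1 S2)"

definition z_st :: "nat \<Rightarrow> (nat \<Rightarrow> 'a \<Rightarrow> 'b \<Rightarrow> 'c \<Rightarrow> real) \<Rightarrow> (nat \<Rightarrow> real)
    \<Rightarrow> ('a \<Rightarrow> real) \<Rightarrow> ('b \<Rightarrow> real) \<Rightarrow> (nat \<Rightarrow> 'c) set \<Rightarrow> ereal" where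
  "z_st m g b f1 f2 S =
     Sup {ereal (f1 x + f2 y) | x y. \<forall>u\<in>S. \<forall>i<m. g i x y (u i) \<le> b i}"

definition z_ad :: "nat \<Rightarrow> (nat \<Rightarrow> 'a \<Rightarrow> 'b \<Rightarrow> 'c \<Rightarrow> real) \<Rightarrow> (nat \<Rightarrow> real)
    \<Rightarrow> ('a \<Rightarrow> real) \<Rightarrow> ('b \<Rightarrow> real) \<Rightarrow> (nat \<Rightarrow> 'c) set \<Rightarrow> ereal" where
  "z_ad m g b f1 f2 S =
     Sup {ereal (f1 x) + (INF u\<in>S. ereal (f2 (y u))) | x (y :: (nat \<Rightarrow> 'c) \<Rightarrow> 'b).
            \<forall>u\<in>S. \<forall>i<m. g i x (y u) (u i) \<le> b i}"

text \<open>All standing hypotheses of the theorem for the data (m, U_1..U_m, C, b, f1, f2, g).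
  Here U = prodset m Us and Ubar = U \<inter> C.\<close>
definition setting :: "nat \<Rightarrow> (nat \<Rightarrow> 'c::euclidean_space set) \<Rightarrow> (nat \<Rightarrow> 'c) set \<Rightarrow> (nat \<Rightarrow> real)
    \<Rightarrow> ('a::euclidean_space \<Rightarrow> real) \<Rightarrow> ('b::euclidean_space \<Rightarrow> real)
    \<Rightarrow> (nat \<Rightarrow> 'a \<Rightarrow> 'b \<Rightarrow> 'c \<Rightarrow> real) \<Rightarrow> bool" where
  "setting m Us C b f1 f2 g \<longleftrightarrow>
     (\<forall>i<m. convex (Us i)) \<and>
     C \<subseteq> blockvecs m \<and>
     (\<lambda>_. 0) \<in> prodset m Us \<inter> C \<and>
     concave_on UNIV f1 \<and> concave_on UNIV f2 \<and> f1 0 = 0 \<and> f2 0 = 0 \<and>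
     (\<forall>i<m. \<forall>v. convex_on UNIV (\<lambda>(x, y). g i x y v)) \<and>
     (\<forall>i<m. \<forall>x y. concave_on UNIV (\<lambda>v. g i x y v)) \<and>
     (\<forall>u\<in>prodset m Us. \<forall>i<m. g i 0 0 (u i) \<le> 0) \<and>
     (\<forall>x y. (\<exists>u\<in>prodset m Us \<inter> C. \<forall>j<m. g j x y (u j) \<le> b j)
            \<longrightarrow> (\<forall>i<m. 0 \<le> g i x y 0)) \<and>
     bdd_above (rho_set (prodset m Us) (Proj m (prodset m Us \<inter> C))) \<and>
     bdd_above (rho_set (prodset m Us) (prodset m Us \<inter> C)) \<and>
     rho (prodset m Us) (prodset m Us \<inter> C) > 0 \<and>
     z_ad m g b f1 f2 (prodset m Us \<inter> C) > 0 \<and>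
     z_st m g b f1 f2 (prodset m Us) < \<infinity>"

end

theory Submission
  imports Defs
begin

lemma ereal_mult_Sup_le:
  fixes A :: "ereal set"
  assumes "0 < r" "\<And>a. a \<in> A \<Longrightarrow> ereal r * a \<le> z"
  shows "ereal r * Sup A \<le> z"
proof -
  have "Sup A \<le> z / ereal r"
    using assms by (intro Sup_least) (simp add: ereal_le_divide_pos)
  then show ?thesis using assms(1) by (simp add: ereal_le_divide_pos)
qed

lemma scaleS_scaleS: "scaleS a (scaleS b X) = scaleS (a * b) X"
  unfolding scaleS_def by (auto simp: image_image)

lemma scaleS_mono: "X \<subseteq> Y \<Longrightarrow> scaleS a X \<subseteq> scaleS a Y"
  unfolding scaleS_def by auto

lemma rho_le1:
  assumes bdd: "bdd_above (rho_set U S)" and sub: "S \<subseteq> U" and r: "r \<in> rho_set U S"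
  shows "r \<le> 1"
proof (rule ccontr)
  assume "\<not> r \<le> 1"
  hence r1: "1 < r" by simp
  have r0: "scaleS r U \<subseteq> S" using r by (simp add: rho_set_def)
  have all: "scaleS (r ^ Suc k) U \<subseteq> S" for k
  proof (induction k)
    case 0 then show ?case using r0 by simp
  next
    case (Suc k)
    have "scaleS (r ^ Suc (Suc k)) U = scaleS r (scaleS (r ^ Suc k) U)"
      by (simp add: scaleS_scaleS)
    also have "\<dots> \<subseteq> scaleS r U" using Suc sub by (intro scaleS_mono) auto
    finally show ?case using r0 by blast
  qed
  obtain M where M: "\<And>x. x \<in> rho_set U S \<Longrightarrow> x \<le> M" using bdd by (auto simp: bdd_above_def)
  obtain n where n: "M < r ^ n" using real_arch_pow[OF r1] by blast
  have "r ^ n \<le> r ^ Suc n" using r1 by simp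
  moreover have "r ^ Suc n \<in> rho_set U S" using all[of n] r1 by (simp add: rho_set_def)
  ultimately show False using M n by fastforce
qed

lemma ratio_bound:
  fixes a b :: ereal and R :: "real set"
  assumes ba: "b \<le> a" and le1: "\<And>r. r \<in> R \<Longrightarrow> r \<le> 1" and ne: "R \<noteq> {}"
    and bdd: "bdd_above R" and pos: "Sup R > 0"
    and sc: "\<And>r. r \<in> R \<Longrightarrow> 0 < r \<Longrightarrow> ereal r * a \<le> b"
  shows "a / b \<le> 1 / ereal (Sup R)"
proof -
  define \<rho> where "\<rho> = Sup R"
  have rho1: "\<rho> \<le> 1" unfolding \<rho>_def using ne le1 by (intro cSup_least) auto
  obtain r0 where r0: "r0 \<in> R" "0 < r0" using pos ne bdd by (auto simp: less_cSup_iff)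
  have rhopos: "0 < \<rho>" using pos by (simp add: \<rho>_def)
  have one: "1 / ereal \<rho> = ereal (1 / \<rho>)" using rhopos by (simp add: one_ereal_def)
  have ge: "1 \<le> 1 / \<rho>" using rho1 rhopos by simp
  show ?thesis
    unfolding \<rho>_def[symmetric] one
  proof (cases b)
    case PInf
    then show "a / b \<le> ereal (1 / \<rho>)" using ba rhopos by (simp add: divide_ereal_def)
  next
    case MInf
    then show "a / b \<le> ereal (1 / \<rho>)" using rhopos by (simp add: divide_ereal_def)
  next
    case (real \<beta>)
    show "a / b \<le> ereal (1 / \<rho>)"
    proof (cases a)
      case PInf
      then show ?thesis using sc[OF r0] r0 real by simp
    next
      case MInf
      then show ?thesis using ba real by simp
    next
      case (real \<alpha>)
      note b = \<open>b = ereal \<beta>\<close>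
      have ab: "\<beta> \<le> \<alpha>" using ba b real by simp
      have scr: "r * \<alpha> \<le> \<beta>" if "r \<in> R" "0 < r" for r using sc[OF that] b real by simp
      consider "\<beta> = 0" | "\<beta> > 0" | "\<beta> < 0" by linarith
      then show ?thesis
      proof cases
        case 1
        have "\<alpha> = 0"
        proof (rule ccontr)
          assume "\<alpha> \<noteq> 0" hence "\<alpha> > 0" using ab 1 by simp
          then show False using scr[OF r0] r0 1 by (smt (verit) mult_pos_pos)
        qed
        then show ?thesis using 1 b real rhopos by simp
      next
        case 2
        show ?thesis
        proof (cases "\<alpha> \<le> 0")
          case True
          then have "\<alpha> / \<beta> \<le> 0" using 2 by (simp add: divide_nonpos_pos)
          then show ?thesis using 2 b real ge by simp
        next
          case False
          have "\<rho> \<le> \<beta> / \<alpha>" unfolding \<rho>_def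
          proof (rule cSup_least[OF ne])
            fix r assume "r \<in> R"
            show "r \<le> \<beta> / \<alpha>"
            proof (cases "0 < r")
              case True then show ?thesis using scr[OF \<open>r \<in> R\<close> True] False
                by (simp add: pos_le_divide_eq)
            next
              case False2: False
              then show ?thesis using False 2 by (smt (verit) divide_pos_pos)
            qed
          qed
          then have "\<alpha> / \<beta> \<le> 1 / \<rho>" using False 2 rhopos
            by (simp add: field_simps)
          then show ?thesis using 2 b real by simp
        qed
      next
        case 3
        show ?thesis
        proof (cases "\<alpha> \<ge> 0")
          case True
          then have "\<alpha> / \<beta> \<le> 0" using 3 by (simp add: divide_nonneg_neg)
          then show ?thesis using 3 b real ge by simp
        next
          case False
          then have "\<alpha> / \<beta> \<le> 1" using 3 ab by (simp add: field_simps)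
          then have "\<alpha> / \<beta> \<le> 1 / \<rho>" using ge by linarith
          then show ?thesis using 3 b real by simp
        qed
      qed
    qed
  qed
qed

lemma scale_feas:
  fixes G :: "'a::real_vector \<Rightarrow> 'b::real_vector \<Rightarrow> 'c::real_vector \<Rightarrow> real"
  assumes cx: "convex_on UNIV (\<lambda>(x, y). G x y v)" and cc: "concave_on UNIV (\<lambda>v. G x y v)"
    and g00: "G 0 0 v \<le> 0" and gxy0: "0 \<le> G x y 0" and feas: "G x y (r *\<^sub>R v) \<le> bb"
    and r: "0 < r" "r \<le> 1"
  shows "G (r *\<^sub>R x) (r *\<^sub>R y) v \<le> bb"
proof -
  have 1: "G (r *\<^sub>R x) (r *\<^sub>R y) v \<le> (1 - r) * G 0 0 v + r * G x y v"
    using convex_onD[OF cx, of r "(0, 0)" "(x, y)"] r by simp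
  have 2: "(1 - r) * G x y 0 + r * G x y v \<le> G x y (r *\<^sub>R v)"
    using concave_onD[OF cc, of r 0 v] r by simp
  have 3: "(1 - r) * G 0 0 v \<le> 0" using g00 r by (simp add: mult_nonneg_nonpos)
  have 4: "0 \<le> (1 - r) * G x y 0" using gxy0 r by simp
  show ?thesis using 1 2 3 4 feas by linarith
qed

lemma concave_scale:
  fixes f :: "'a::real_vector \<Rightarrow> real"
  assumes "concave_on UNIV f" "f 0 = 0" "0 \<le> r" "r \<le> 1"
  shows "r * f x \<le> f (r *\<^sub>R x)"
  using concave_onD[OF assms(1), of r 0 x] assms by simp

lemma part1:
  fixes Us :: "nat \<Rightarrow> 'c::euclidean_space set" and f1 :: "'a::euclidean_space \<Rightarrow> real"
    and f2 :: "'b::euclidean_space \<Rightarrow> real"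
  assumes S: "setting m Us C b f1 f2 g"
  shows "z_st m g b f1 f2 (prodset m Us \<inter> C) / z_st m g b f1 f2 (prodset m Us)
          \<le> 1 / ereal (rho (prodset m Us) (Proj m (prodset m Us \<inter> C))) \<and>
        z_ad m g b f1 f2 (prodset m Us \<inter> C) / z_ad m g b f1 f2 (prodset m Us)
          \<le> 1 / ereal (rho (prodset m Us) (prodset m Us \<inter> C))"
proof -
  define U where "U = prodset m Us"
  define Ub where "Ub = U \<inter> C"
  have SS: "(\<forall>i<m. convex (Us i)) \<and>
     C \<subseteq> blockvecs m \<and>
     (\<lambda>_. 0) \<in> U \<inter> C \<and>
     concave_on UNIV f1 \<and> concave_on UNIV f2 \<and> f1 0 = 0 \<and> f2 0 = 0 \<and>
     (\<forall>i<m. \<forall>v. convex_on UNIV (\<lambda>(x, y). g i x y v)) \<and>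
     (\<forall>i<m. \<forall>x y. concave_on UNIV (\<lambda>v. g i x y v)) \<and>
     (\<forall>u\<in>U. \<forall>i<m. g i 0 0 (u i) \<le> 0) \<and>
     (\<forall>x y. (\<exists>u\<in>U \<inter> C. \<forall>j<m. g j x y (u j) \<le> b j)
            \<longrightarrow> (\<forall>i<m. 0 \<le> g i x y 0)) \<and>
     bdd_above (rho_set U (Proj m (U \<inter> C))) \<and>
     bdd_above (rho_set U (U \<inter> C)) \<and>
     rho U (U \<inter> C) > 0"
    using S unfolding setting_def U_def by (elim conjE) (intro conjI; assumption)
  have cx: "\<And>i v. i < m \<Longrightarrow> convex_on UNIV (\<lambda>(x, y). g i x y v)"
    using SS by blast
  have cc: "\<And>i x y. i < m \<Longrightarrow> concave_on UNIV (\<lambda>v. g i x y v)"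
    using SS by blast
  have g00: "\<And>u i. u \<in> U \<Longrightarrow> i < m \<Longrightarrow> g i 0 0 (u i) \<le> 0"
    using SS by blast
  have g0: "\<And>x y w i. w \<in> Ub \<Longrightarrow> (\<forall>j<m. g j x y (w j) \<le> b j) \<Longrightarrow> i < m \<Longrightarrow> 0 \<le> g i x y 0"
  proof -
    fix x y w i assume "w \<in> Ub" "\<forall>j<m. g j x y (w j) \<le> b j" "i < m"
    moreover have "(\<exists>u\<in>U \<inter> C. \<forall>j<m. g j x y (u j) \<le> b j) \<longrightarrow> (\<forall>i<m. 0 \<le> g i x y 0)"
      using SS by blast
    ultimately show "0 \<le> g i x y 0" unfolding Ub_def by blast
  qed
  have f1c: "concave_on UNIV f1" and f2c: "concave_on UNIV f2" and f10: "f1 0 = 0" and f20: "f2 0 = 0"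
    using SS by blast+
  have bdd1: "bdd_above (rho_set U (Proj m Ub))" using SS unfolding Ub_def by (elim conjE) assumption
  have bdd2: "bdd_above (rho_set U Ub)" using SS unfolding Ub_def by (elim conjE) assumption
  have rhopos: "rho U Ub > 0" using SS unfolding Ub_def by (elim conjE) assumption
  have zero: "(\<lambda>_. 0) \<in> Ub" using SS unfolding Ub_def by (elim conjE) assumption
  have UbU: "Ub \<subseteq> U" unfolding Ub_def by blast
  have ProjU: "Proj m Ub \<subseteq> U"
    unfolding Proj_def prodset_def proj_def U_def Ub_def by auto
  have UbProj: "Ub \<subseteq> Proj m Ub"
    using UbU unfolding Proj_def prodset_def proj_def U_def by auto
  have zr: "0 \<in> rho_set U X" if "(\<lambda>_. 0) \<in> X" for X
    using that unfolding rho_set_def scaleS_def by auto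
  define R1 where "R1 = rho_set U (Proj m Ub)"
  define R2 where "R2 = rho_set U Ub"
  have R21: "R2 \<subseteq> R1" unfolding R1_def R2_def rho_set_def using UbProj by auto
  have ne2: "R2 \<noteq> {}" using zr[OF zero] R2_def by auto
  have ne1: "R1 \<noteq> {}" using ne2 R21 by auto
  have pos2: "Sup R2 > 0" using rhopos unfolding rho_def R2_def by simp
  have pos1: "Sup R1 > 0"
    using cSup_subset_mono[OF ne2 bdd1[folded R1_def] R21] pos2 by linarith
  have st_mono: "z_st m g b f1 f2 U \<le> z_st m g b f1 f2 Ub"
    unfolding z_st_def using UbU by (intro Sup_subset_mono) blast
  have st_sc: "ereal r * z_st m g b f1 f2 Ub \<le> z_st m g b f1 f2 U" if rR: "r \<in> R1" and r0: "0 < r" for r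
  proof -
    have r1: "r \<le> 1" using rho_le1[OF bdd1 ProjU] rR R1_def by blast
    show ?thesis unfolding z_st_def[of _ _ _ _ _ Ub]
    proof (rule ereal_mult_Sup_le[OF r0])
      fix a assume "a \<in> {ereal (f1 x + f2 y) |x y. \<forall>u\<in>Ub. \<forall>i<m. g i x y (u i) \<le> b i}"
      then obtain x y where a: "a = ereal (f1 x + f2 y)" and feas: "\<forall>u\<in>Ub. \<forall>i<m. g i x y (u i) \<le> b i"
        by blast
      have feas': "\<forall>u\<in>U. \<forall>i<m. g i (r *\<^sub>R x) (r *\<^sub>R y) (u i) \<le> b i"
      proof (intro ballI allI impI)
        fix u i assume u: "u \<in> U" and i: "i < m"
        have "(\<lambda>j. r *\<^sub>R u j) \<in> Proj m Ub"
          using rR u unfolding R1_def rho_set_def scaleS_def by blast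
        then have "r *\<^sub>R u i \<in> proj i Ub" using i unfolding Proj_def prodset_def by auto
        then obtain w where w: "w \<in> Ub" "w i = r *\<^sub>R u i" unfolding proj_def by auto
        show "g i (r *\<^sub>R x) (r *\<^sub>R y) (u i) \<le> b i"
          by (rule scale_feas[OF cx[OF i] cc[OF i] g00[OF u i] g0[OF w(1) _ i]])
            (use bspec[OF feas w(1)] w r0 r1 i in auto)
      qed
      have "ereal r * a = ereal (r * f1 x + r * f2 y)" using a by (simp add: algebra_simps)
      also have "\<dots> \<le> ereal (f1 (r *\<^sub>R x) + f2 (r *\<^sub>R y))"
        using concave_scale[OF f1c f10, of r x] concave_scale[OF f2c f20, of r y] r0 r1 by simp
      also have "\<dots> \<le> z_st m g b f1 f2 U"
        unfolding z_st_def
        by (rule Sup_upper, rule CollectI, rule exI[of _ "r *\<^sub>R x"], rule exI[of _ "r *\<^sub>R y"])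
          (use feas' in simp)
      finally show "ereal r * a \<le> z_st m g b f1 f2 U" .
    qed
  qed
  have le1: "r \<le> 1" if "r \<in> R1" for r using rho_le1[OF bdd1 ProjU] that R1_def by blast
  have P1: "z_st m g b f1 f2 Ub / z_st m g b f1 f2 U \<le> 1 / ereal (Sup R1)"
    by (rule ratio_bound[OF st_mono le1 ne1 bdd1[folded R1_def] pos1 st_sc])
  have ad_mono: "z_ad m g b f1 f2 U \<le> z_ad m g b f1 f2 Ub"
    unfolding z_ad_def
  proof (rule Sup_mono)
    fix a assume "a \<in> {ereal (f1 x) + (INF u\<in>U. ereal (f2 (y u))) |x (y :: (nat \<Rightarrow> 'c) \<Rightarrow> 'b).
            \<forall>u\<in>U. \<forall>i<m. g i x (y u) (u i) \<le> b i}"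
    then obtain x and y :: "(nat \<Rightarrow> 'c) \<Rightarrow> 'b" where a: "a = ereal (f1 x) + (INF u\<in>U. ereal (f2 (y u)))"
      and feas: "\<forall>u\<in>U. \<forall>i<m. g i x (y u) (u i) \<le> b i" by blast
    have "a \<le> ereal (f1 x) + (INF u\<in>Ub. ereal (f2 (y u)))"
      unfolding a by (intro add_left_mono INF_superset_mono UbU) auto
    moreover have "ereal (f1 x) + (INF u\<in>Ub. ereal (f2 (y u))) \<in> {ereal (f1 x) + (INF u\<in>Ub. ereal (f2 (y u))) |x (y :: (nat \<Rightarrow> 'c) \<Rightarrow> 'b).
            \<forall>u\<in>Ub. \<forall>i<m. g i x (y u) (u i) \<le> b i}"
      by (rule CollectI, rule exI[of _ x], rule exI[of _ y]) (use feas UbU in blast)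
    ultimately show "\<exists>a'\<in>{ereal (f1 x) + (INF u\<in>Ub. ereal (f2 (y u))) |x (y :: (nat \<Rightarrow> 'c) \<Rightarrow> 'b).
            \<forall>u\<in>Ub. \<forall>i<m. g i x (y u) (u i) \<le> b i}. a \<le> a'" by blast
  qed
  have ad_sc: "ereal r * z_ad m g b f1 f2 Ub \<le> z_ad m g b f1 f2 U" if rR: "r \<in> R2" and r0: "0 < r" for r
  proof -
    have r1: "r \<le> 1" using rho_le1[OF bdd2 UbU] rR R2_def by blast
    have hmem: "(\<lambda>i. r *\<^sub>R u i) \<in> Ub" if "u \<in> U" for u
      using rR that unfolding R2_def rho_set_def scaleS_def by blast
    show ?thesis unfolding z_ad_def[of _ _ _ _ _ Ub]
    proof (rule ereal_mult_Sup_le[OF r0])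
      fix a assume "a \<in> {ereal (f1 x) + (INF u\<in>Ub. ereal (f2 (y u))) |x (y :: (nat \<Rightarrow> 'c) \<Rightarrow> 'b).
            \<forall>u\<in>Ub. \<forall>i<m. g i x (y u) (u i) \<le> b i}"
      then obtain x and y :: "(nat \<Rightarrow> 'c) \<Rightarrow> 'b" where a: "a = ereal (f1 x) + (INF u\<in>Ub. ereal (f2 (y u)))"
        and feas: "\<forall>u\<in>Ub. \<forall>i<m. g i x (y u) (u i) \<le> b i" by blast
      define y' where "y' u = r *\<^sub>R y (\<lambda>i. r *\<^sub>R u i)" for u
      have feas': "\<forall>u\<in>U. \<forall>i<m. g i (r *\<^sub>R x) (y' u) (u i) \<le> b i"
      proof (intro ballI allI impI)
        fix u i assume u: "u \<in> U" and i: "i < m"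
        define w where "w = (\<lambda>i. r *\<^sub>R u i)"
        have w: "w \<in> Ub" using hmem[OF u] w_def by simp
        show "g i (r *\<^sub>R x) (y' u) (u i) \<le> b i"
          unfolding y'_def w_def[symmetric]
          by (rule scale_feas[OF cx[OF i] cc[OF i] g00[OF u i] g0[OF w _ i]])
            (use feas w r0 r1 i w_def in auto)
      qed
      define I where "I = (INF u\<in>Ub. ereal (f2 (y u)))"
      have Ile: "I \<le> ereal (f2 (y (\<lambda>_. 0)))" unfolding I_def by (rule INF_lower[OF zero])
      have Ifin: "I \<noteq> \<infinity>" using Ile by auto
      have "ereal r * a = ereal r * ereal (f1 x) + ereal r * I"
        unfolding a I_def[symmetric] by (rule ereal_distrib_left) auto
      also have "\<dots> = ereal (r * f1 x) + ereal r * I" by simp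
      also have "\<dots> \<le> ereal (f1 (r *\<^sub>R x)) + (INF u\<in>U. ereal (f2 (y' u)))"
      proof (rule add_mono)
        show "ereal (r * f1 x) \<le> ereal (f1 (r *\<^sub>R x))"
          using concave_scale[OF f1c f10, of r x] r0 r1 by simp
        show "ereal r * I \<le> (INF u\<in>U. ereal (f2 (y' u)))"
        proof (rule INF_greatest)
          fix u assume u: "u \<in> U"
          have "ereal r * I \<le> ereal r * ereal (f2 (y (\<lambda>i. r *\<^sub>R u i)))"
            unfolding I_def using r0 by (intro ereal_mult_left_mono INF_lower hmem[OF u]) auto
          also have "\<dots> = ereal (r * f2 (y (\<lambda>i. r *\<^sub>R u i)))" by simp
          also have "\<dots> \<le> ereal (f2 (y' u))"
            unfolding y'_def using concave_scale[OF f2c f20, of r] r0 r1 by simp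
          finally show "ereal r * I \<le> ereal (f2 (y' u))" .
        qed
      qed
      also have "\<dots> \<le> z_ad m g b f1 f2 U"
        unfolding z_ad_def
        by (rule Sup_upper, rule CollectI, rule exI[of _ "r *\<^sub>R x"], rule exI[of _ y'])
          (use feas' in simp)
      finally show "ereal r * a \<le> z_ad m g b f1 f2 U" .
    qed
  qed
  have le2: "r \<le> 1" if "r \<in> R2" for r using rho_le1[OF bdd2 UbU] that R2_def by blast
  have P2: "z_ad m g b f1 f2 Ub / z_ad m g b f1 f2 U \<le> 1 / ereal (Sup R2)"
    by (rule ratio_bound[OF ad_mono le2 ne2 bdd2[folded R2_def] pos2 ad_sc])
  show ?thesis using P1 P2 unfolding rho_def R1_def R2_def U_def Ub_def by simp
qed


definition T :: "real \<Rightarrow> (nat \<Rightarrow> real) set" where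
  "T c = {u. u \<in> blockvecs 1 \<and> 0 \<le> u 0 \<and> u 0 \<le> c}"

definition e1 :: "nat \<Rightarrow> real" where "e1 = (\<lambda>i. if i = 0 then 1 else 0)"

lemma e1_T: "1 \<le> c \<Longrightarrow> e1 \<in> T c" by (auto simp: T_def e1_def blockvecs_def)
lemma zero_T: "0 \<le> c \<Longrightarrow> (\<lambda>_. 0) \<in> T c" by (auto simp: T_def blockvecs_def)

lemma feas_T:
  assumes "0 < c"
  shows "(\<forall>u\<in>T c. \<forall>i<1. u i * x \<le> (1::real)) \<longleftrightarrow> c * x \<le> 1"
proof
  assume h: "\<forall>u\<in>T c. \<forall>i<1. u i * x \<le> (1::real)"
  have "(\<lambda>i. if i = 0 then c else 0) \<in> T c" using assms by (auto simp: T_def blockvecs_def)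
  from h[rule_format, OF this, of 0] show "c * x \<le> 1" by simp
next
  assume h: "c * x \<le> 1"
  show "\<forall>u\<in>T c. \<forall>i<1. u i * x \<le> (1::real)"
  proof (intro ballI allI impI)
    fix u i assume u: "u \<in> T c" and i: "i < (1::nat)"
    have "0 \<le> u 0" "u 0 \<le> c" using u by (auto simp: T_def)
    have "u 0 * x \<le> 1"
    proof (cases "x \<le> 0")
      case True
      then have "u 0 * x \<le> 0" using \<open>0 \<le> u 0\<close> by (simp add: mult_nonneg_nonpos)
      then show ?thesis by linarith
    next
      case False
      then have "u 0 * x \<le> c * x" using \<open>u 0 \<le> c\<close> by (intro mult_right_mono) auto
      then show ?thesis using h by linarith
    qed
    then show "u i * x \<le> 1" using i by simp
  qed
qed

lemma Sup_half:
  assumes "0 < c"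
  shows "Sup {ereal x |x. c * x \<le> 1} = ereal (1 / c)"
proof (rule antisym)
  show "Sup {ereal x |x. c * x \<le> 1} \<le> ereal (1 / c)"
    using assms by (intro Sup_least) (auto simp: field_simps)
  show "ereal (1 / c) \<le> Sup {ereal x |x. c * x \<le> 1}"
    using assms by (intro Sup_upper) auto
qed

lemma zst_T:
  assumes "0 < c"
  shows "z_st 1 (\<lambda>i x (y::real) v. v * x) (\<lambda>_. 1) (\<lambda>x. x) (\<lambda>_. 0::real) (T c) = ereal (1 / c)"
proof -
  have "{ereal (x + 0) |x (y::real). \<forall>u\<in>T c. \<forall>i<1. u i * x \<le> 1} = {ereal x |x. c * x \<le> 1}"
    using feas_T[OF assms] by auto
  then show ?thesis unfolding z_st_def using Sup_half[OF assms] by simp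
qed

lemma zad_T:
  assumes "0 < c"
  shows "z_ad 1 (\<lambda>i x (y::real) v. v * x) (\<lambda>_. 1) (\<lambda>x. x) (\<lambda>_. 0::real) (T c) = ereal (1 / c)"
proof -
  have ne: "T c \<noteq> {}" using zero_T[of c] assms by auto
  have "{ereal x + (INF u\<in>T c. ereal 0) |x (y :: (nat \<Rightarrow> real) \<Rightarrow> real).
            \<forall>u\<in>T c. \<forall>i<1. u i * x \<le> 1} = {ereal x |x. c * x \<le> 1}"
    using feas_T[OF assms] ne by auto
  then show ?thesis unfolding z_ad_def using Sup_half[OF assms] by simp
qed

lemma rho_set_T:
  assumes "0 < r" "r \<le> 1"
  shows "rho_set (T 1) (T r) = {0..r}"
proof
  show "rho_set (T 1) (T r) \<subseteq> {0..r}"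
  proof
    fix s assume s: "s \<in> rho_set (T 1) (T r)"
    then have "(\<lambda>i. s *\<^sub>R e1 i) \<in> T r" using e1_T[of 1]
      unfolding rho_set_def scaleS_def by blast
    then show "s \<in> {0..r}" using s by (simp add: T_def e1_def rho_set_def)
  qed
  show "{0..r} \<subseteq> rho_set (T 1) (T r)"
  proof
    fix s assume s: "s \<in> {0..r}"
    have "scaleS s (T 1) \<subseteq> T r"
    proof
      fix v assume "v \<in> scaleS s (T 1)"
      then obtain u where u: "u \<in> T 1" "v = (\<lambda>i. s * u i)" unfolding scaleS_def by auto
      have "s * u 0 \<le> s * 1" using u s by (intro mult_left_mono) (auto simp: T_def)
      then show "v \<in> T r" using u s by (auto simp: T_def blockvecs_def)
    qed
    then show "s \<in> rho_set (T 1) (T r)" using s by (simp add: rho_set_def)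
  qed
qed

lemma Proj_T: "Proj 1 (T r) = T r"
proof (intro set_eqI iffI)
  fix v :: "nat \<Rightarrow> real" assume v: "v \<in> Proj 1 (T r)"
  then have "v 0 \<in> proj 0 (T r)" "v \<in> blockvecs 1" unfolding Proj_def prodset_def by auto
  then obtain w where "w \<in> T r" "v 0 = w 0" unfolding proj_def by auto
  then show "v \<in> T r" using \<open>v \<in> blockvecs 1\<close> unfolding T_def by auto
next
  fix v :: "nat \<Rightarrow> real" assume v: "v \<in> T r"
  have "v i \<in> proj i (T r)" for i unfolding proj_def using v by blast
  then show "v \<in> Proj 1 (T r)" using v unfolding Proj_def prodset_def T_def by auto
qed

lemma prod_T: "prodset 1 (\<lambda>_. {0..1::real}) = T 1"
  unfolding prodset_def T_def by auto

lemma prodC_T: "r \<le> 1 \<Longrightarrow> prodset 1 (\<lambda>_. {0..1::real}) \<inter> {u \<in> blockvecs 1. u 0 \<le> r} = T r"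
  unfolding prod_T T_def by auto

lemma C_T: "r \<le> 1 \<Longrightarrow> T 1 \<inter> {u \<in> blockvecs 1. u 0 \<le> r} = T r"
  unfolding T_def by auto

lemma setting_ex:
  assumes r: "0 < r" "r \<le> 1"
  shows "setting 1 (\<lambda>_. {0..1::real}) {u \<in> blockvecs 1. u 0 \<le> r} (\<lambda>_. 1) (\<lambda>x::real. x) (\<lambda>_::real. 0::real)
           (\<lambda>i x (y::real) v. v * x)"
  unfolding setting_def prod_T C_T[OF r(2)] Proj_T rho_def rho_set_T[OF r] zst_T[of 1] zad_T[OF r(1)]
proof (intro conjI)
  show "\<forall>i<1. convex {0..1::real}" by (simp add: convex_real_interval)
  show "{u \<in> blockvecs 1. u 0 \<le> r} \<subseteq> blockvecs 1" by auto
  show "(\<lambda>_. 0) \<in> T r" using zero_T r by simp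
  show "concave_on UNIV (\<lambda>x::real. x)" by (simp add: concave_on_iff)
  show "concave_on UNIV (\<lambda>_::real. 0::real)" by (simp add: concave_on_iff)
  show "\<forall>i<1. \<forall>v::real. convex_on UNIV (\<lambda>(x::real, y::real). v * x)"
    by (auto simp: convex_on_def algebra_simps)
  show "\<forall>i<1. \<forall>(x::real) (y::real). concave_on UNIV (\<lambda>v. v * x)"
    by (auto simp: concave_on_iff algebra_simps)
qed (use r zst_T[of 1] in simp_all)

theorem theorem10:
  shows
  "(\<forall>(m::nat) (Us :: nat \<Rightarrow> 'c::euclidean_space set) C b
       (f1 :: 'a::euclidean_space \<Rightarrow> real) (f2 :: 'b::euclidean_space \<Rightarrow> real) g.
      setting m Us C b f1 f2 g \<longrightarrow>
        z_st m g b f1 f2 (prodset m Us \<inter> C) / z_st m g b f1 f2 (prodset m Us)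
          \<le> 1 / ereal (rho (prodset m Us) (Proj m (prodset m Us \<inter> C))) \<and>
        z_ad m g b f1 f2 (prodset m Us \<inter> C) / z_ad m g b f1 f2 (prodset m Us)
          \<le> 1 / ereal (rho (prodset m Us) (prodset m Us \<inter> C)))
   \<and>
   (\<forall>r::real. 0 < r \<and> r \<le> 1 \<longrightarrow>
      (\<exists>(m::nat) (Us :: nat \<Rightarrow> real set) C b (f1 :: real \<Rightarrow> real) (f2 :: real \<Rightarrow> real) g.
         setting m Us C b f1 f2 g \<and>
         rho (prodset m Us) (Proj m (prodset m Us \<inter> C)) = r \<and>
         z_st m g b f1 f2 (prodset m Us \<inter> C) / z_st m g b f1 f2 (prodset m Us)
           = 1 / ereal (rho (prodset m Us) (Proj m (prodset m Us \<inter> C))))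
    \<and> (\<exists>(m::nat) (Us :: nat \<Rightarrow> real set) C b (f1 :: real \<Rightarrow> real) (f2 :: real \<Rightarrow> real) g.
         setting m Us C b f1 f2 g \<and>
         rho (prodset m Us) (prodset m Us \<inter> C) = r \<and>
         z_ad m g b f1 f2 (prodset m Us \<inter> C) / z_ad m g b f1 f2 (prodset m Us)
           = 1 / ereal (rho (prodset m Us) (prodset m Us \<inter> C))))"
proof -
  let ?C = "\<lambda>r::real. {u \<in> blockvecs 1. u 0 \<le> r}"
  have rho_eq: "rho (prodset 1 (\<lambda>_. {0..1::real})) (Proj 1 (prodset 1 (\<lambda>_. {0..1::real}) \<inter> ?C r)) = r"
    and rho_eq2: "rho (prodset 1 (\<lambda>_. {0..1::real})) (prodset 1 (\<lambda>_. {0..1::real}) \<inter> ?C r) = r"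
    if "0 < r" "r \<le> 1" for r
    using that unfolding prod_T C_T[OF that(2)] Proj_T rho_def rho_set_T[OF that] by simp_all
  have zs: "z_st 1 (\<lambda>i x (y::real) v. v * x) (\<lambda>_. 1) (\<lambda>x. x) (\<lambda>_. 0::real) (prodset 1 (\<lambda>_. {0..1::real}) \<inter> ?C r)
       / z_st 1 (\<lambda>i x (y::real) v. v * x) (\<lambda>_. 1) (\<lambda>x. x) (\<lambda>_. 0::real) (prodset 1 (\<lambda>_. {0..1::real}))
       = 1 / ereal r"
    and za: "z_ad 1 (\<lambda>i x (y::real) v. v * x) (\<lambda>_. 1) (\<lambda>x. x) (\<lambda>_. 0::real) (prodset 1 (\<lambda>_. {0..1::real}) \<inter> ?C r)
       / z_ad 1 (\<lambda>i x (y::real) v. v * x) (\<lambda>_. 1) (\<lambda>x. x) (\<lambda>_. 0::real) (prodset 1 (\<lambda>_. {0..1::real}))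
       = 1 / ereal r"
    if "0 < r" "r \<le> 1" for r
    using that zst_T[of 1] zad_T[of 1] unfolding prod_T C_T[OF that(2)] zst_T[OF that(1)] zad_T[OF that(1)]
    by (simp_all add: one_ereal_def)
  show ?thesis
  proof (intro conjI allI impI)
    fix m Us C b and f1 :: "'a::euclidean_space \<Rightarrow> real" and f2 :: "'b::euclidean_space \<Rightarrow> real" and g
    assume "setting m (Us :: nat \<Rightarrow> 'c::euclidean_space set) C b f1 f2 g"
    from part1[OF this] show "z_st m g b f1 f2 (prodset m Us \<inter> C) / z_st m g b f1 f2 (prodset m Us)
          \<le> 1 / ereal (rho (prodset m Us) (Proj m (prodset m Us \<inter> C)))" by blast
    from part1[OF \<open>setting m Us C b f1 f2 g\<close>] show "z_ad m g b f1 f2 (prodset m Us \<inter> C) / z_ad m g b f1 f2 (prodset m Us)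
          \<le> 1 / ereal (rho (prodset m Us) (prodset m Us \<inter> C))" by blast
  next
    fix r :: real assume r: "0 < r \<and> r \<le> 1"
    then have r0: "0 < r" and r1: "r \<le> 1" by auto
    show "\<exists>(m::nat) (Us :: nat \<Rightarrow> real set) C b (f1 :: real \<Rightarrow> real) (f2 :: real \<Rightarrow> real) g.
         setting m Us C b f1 f2 g \<and>
         rho (prodset m Us) (Proj m (prodset m Us \<inter> C)) = r \<and>
         z_st m g b f1 f2 (prodset m Us \<inter> C) / z_st m g b f1 f2 (prodset m Us)
           = 1 / ereal (rho (prodset m Us) (Proj m (prodset m Us \<inter> C)))"
      by (intro exI[of _ 1] exI[of _ "\<lambda>_. {0..1::real}"] exI[of _ "?C r"] exI[of _ "\<lambda>_. 1"]
          exI[of _ "\<lambda>x::real. x"] exI[of _ "\<lambda>_::real. 0::real"] exI[of _ "\<lambda>i x (y::real) v. v * x"] conjI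
          setting_ex[OF r0 r1]) (simp_all only: rho_eq[OF r0 r1] zs[OF r0 r1])
    show "\<exists>(m::nat) (Us :: nat \<Rightarrow> real set) C b (f1 :: real \<Rightarrow> real) (f2 :: real \<Rightarrow> real) g.
         setting m Us C b f1 f2 g \<and>
         rho (prodset m Us) (prodset m Us \<inter> C) = r \<and>
         z_ad m g b f1 f2 (prodset m Us \<inter> C) / z_ad m g b f1 f2 (prodset m Us)
           = 1 / ereal (rho (prodset m Us) (prodset m Us \<inter> C))"
      by (intro exI[of _ 1] exI[of _ "\<lambda>_. {0..1::real}"] exI[of _ "?C r"] exI[of _ "\<lambda>_. 1"]
          exI[of _ "\<lambda>x::real. x"] exI[of _ "\<lambda>_::real. 0::real"] exI[of _ "\<lambda>i x (y::real) v. v * x"] conjI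
          setting_ex[OF r0 r1]) (simp_all only: rho_eq2[OF r0 r1] za[OF r0 r1])
  qed
qed

end
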